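(* For every nonnegative integer $n$, $$\sum_{k=0}^{\infty}(-1)^k(4k+1)\,\frac{(-3n)_k\,(-4n-\tfrac16)_k\,(\tfrac12)_k}{k!\,(3n+\tfrac32)_k\,(4n+\tfrac53)_k}=\left(\frac{2^8 3^3}{7^7}\right)^n\frac{(\tfrac{11}{12})_n(\tfrac56)_n(\tfrac12)_n(\tfrac{5}{12})_n(\tfrac76)_n^2}{(\tfrac{11}{21})_n(\tfrac{23}{21})_n(\tfrac{5}{21})_n(\tfrac{17}{21})_n(\tfrac{8}{21})_n(\tfrac{20}{21})_n}.$$ (The sum is finite, since $(-3n)_k=0$ for $k>3n$.)
   Context: $(a)_j=\Gamma(a+j)/\Gamma(a)=a(a+1)\cdots(a+j-1)$ denotes the rising factorial (Pochhammer symbol), with $(a)_0=1$. *)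

theory Defs
  imports Complex_Main
begin

end

theory Submission imports Defs begin

lemma poch_shift: "pochhammer (a::real) k * pochhammer (a + of_nat k) m = pochhammer a m * pochhammer (a + of_nat m) k"
  by (metis pochhammer_product' add.commute)

lemma aux_sc: "(p1::real)*q = a*p2 \<Longrightarrow> p2*(c*a) = p1*(c*q)"
  by (simp add: mult.commute mult.left_commute)

lemma poch3: "pochhammer (b::real) 3 = b*(b+1)*(b+2)"
  by (simp add: eval_nat_numeral pochhammer_Suc algebra_simps)
lemma poch4: "pochhammer (b::real) 4 = b*(b+1)*(b+2)*(b+3)"
  by (simp add: eval_nat_numeral pochhammer_Suc algebra_simps)

lemma shA: fixes x k :: real assumes "k = of_nat kk"
  shows "pochhammer (-3*x) kk * ((-3*x-3)*(-3*x-2)*(-3*x-1)) = pochhammer (-3*x-3) kk * ((k-3*x-3)*(k-3*x-2)*(k-3*x-1))"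
proof -
  have "pochhammer (-3*x-3) kk * pochhammer (-3*x-3 + of_nat kk) 3 = pochhammer (-3*x-3) 3 * pochhammer (-3*x-3 + of_nat 3) kk"
    by (rule poch_shift)
  then show ?thesis using assms by (simp add: poch3 algebra_simps)
qed

lemma shB: fixes x k :: real assumes "k = of_nat kk"
  shows "pochhammer (-4*x-1/6) kk * ((-24*x-25)*(-24*x-19)*(-24*x-13)*(-24*x-7)) = pochhammer (-4*x-25/6) kk * ((6*k-24*x-25)*(6*k-24*x-19)*(6*k-24*x-13)*(6*k-24*x-7))"
proof -
  have "pochhammer (-4*x-25/6) kk * pochhammer (-4*x-25/6 + of_nat kk) 4 = pochhammer (-4*x-25/6) 4 * pochhammer (-4*x-25/6 + of_nat 4) kk"
    by (rule poch_shift)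
  then have "pochhammer (-4*x-25/6) kk * ((k-4*x-25/6)*(k-4*x-19/6)*(k-4*x-13/6)*(k-4*x-7/6)) = ((-4*x-25/6)*(-4*x-19/6)*(-4*x-13/6)*(-4*x-7/6)) * pochhammer (-4*x-1/6) kk"
    using assms by (simp add: poch4 algebra_simps)
  note E = this
  have e1: "(-24*x-25)*(-24*x-19)*(-24*x-13)*(-24*x-7) = 1296*((-4*x-25/6)*(-4*x-19/6)*(-4*x-13/6)*(-4*x-7/6))"
    by (simp add: field_simps)
  have e2: "(6*k-24*x-25)*(6*k-24*x-19)*(6*k-24*x-13)*(6*k-24*x-7) = 1296*((k-4*x-25/6)*(k-4*x-19/6)*(k-4*x-13/6)*(k-4*x-7/6))"
    by (simp add: field_simps)
  show ?thesis unfolding e1 e2 by (rule aux_sc[OF E])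
qed

lemma shC: fixes x k :: real assumes "k = of_nat kk"
  shows "pochhammer (3*x+9/2) kk * ((6*x+3)*(6*x+5)*(6*x+7)) = pochhammer (3*x+3/2) kk * ((2*k+6*x+3)*(2*k+6*x+5)*(2*k+6*x+7))"
proof -
  have "pochhammer (3*x+3/2) kk * pochhammer (3*x+3/2 + of_nat kk) 3 = pochhammer (3*x+3/2) 3 * pochhammer (3*x+3/2 + of_nat 3) kk"
    by (rule poch_shift)
  then have "pochhammer (3*x+3/2) kk * ((k+3*x+3/2)*(k+3*x+5/2)*(k+3*x+7/2)) = ((3*x+3/2)*(3*x+5/2)*(3*x+7/2)) * pochhammer (3*x+9/2) kk"
    using assms by (simp add: poch3 algebra_simps)
  then have "8 * (pochhammer (3*x+3/2) kk * ((k+3*x+3/2)*(k+3*x+5/2)*(k+3*x+7/2))) = 8 * (((3*x+3/2)*(3*x+5/2)*(3*x+7/2)) * pochhammer (3*x+9/2) kk)"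
    by simp
  then show ?thesis by (simp add: algebra_simps)
qed

lemma shD: fixes x k :: real assumes "k = of_nat kk"
  shows "pochhammer (4*x+17/3) kk * ((12*x+5)*(12*x+8)*(12*x+11)*(12*x+14)) = pochhammer (4*x+5/3) kk * ((3*k+12*x+5)*(3*k+12*x+8)*(3*k+12*x+11)*(3*k+12*x+14))"
proof -
  have "pochhammer (4*x+5/3) kk * pochhammer (4*x+5/3 + of_nat kk) 4 = pochhammer (4*x+5/3) 4 * pochhammer (4*x+5/3 + of_nat 4) kk"
    by (rule poch_shift)
  then have "pochhammer (4*x+5/3) kk * ((k+4*x+5/3)*(k+4*x+8/3)*(k+4*x+11/3)*(k+4*x+14/3)) = ((4*x+5/3)*(4*x+8/3)*(4*x+11/3)*(4*x+14/3)) * pochhammer (4*x+17/3) kk"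
    using assms by (simp add: poch4 algebra_simps)
  note E = this
  have e1: "(12*x+5)*(12*x+8)*(12*x+11)*(12*x+14) = 81*((4*x+5/3)*(4*x+8/3)*(4*x+11/3)*(4*x+14/3))"
    by (simp add: field_simps)
  have e2: "(3*k+12*x+5)*(3*k+12*x+8)*(3*k+12*x+11)*(3*k+12*x+14) = 81*((k+4*x+5/3)*(k+4*x+8/3)*(k+4*x+11/3)*(k+4*x+14/3))"
    by (simp add: field_simps)
  show ?thesis unfolding e1 e2 by (rule aux_sc[OF E])
qed
definition Yp :: "real \<Rightarrow> real \<Rightarrow> real" where
  "Yp n k = (56215869706920000 + 1838565516902730000 * n + 27958903146328120200 * n^2 + 262790177249306531520 * n^3 + 1711507933701189354384 * n^4 + 8205275155997611590264 * n^5 + 30020653839856936017888 * n^6 + 85737563928432531961272 * n^7 + 193830898306880012490576 * n^8 + 349586446611250537209576 * n^9 + 504353624924407670218080 * n^10 + 580857085151374038110208 * n^11 + 530215557116238128204928 * n^12 + 378514904705558898899328 * n^13 + 206740925258544851309568 * n^14 + 83386185946470630328320 * n^15 + 23394088052177367416832 * n^16 + 4074928344877221937152 * n^17 + 331748035896340905984 * n^18) + k * ((5525638092513000 + 156472689087102150 * n + 2054774333655346050 * n^2 + 16602602576141921868 * n^3 + 92360874615936074208 * n^4 + 375043387053062979504 * n^5 + 1149802477582923166248 * n^6 + 2714764092168756955680 * n^7 + 4988894386569425282232 * n^8 + 7159843528500829281120 * n^9 + 7998607330569410033664 * n^10 + 6883084218861078392448 * n^11 + 4473226704773527088256 * n^12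 + 2122613243675220731904 * n^13 + 693632500592852146176 * n^14 + 139480884414623711232 * n^15 + 13003855338440097792 * n^16) + k * (((-10225474316961750) + (-294051150957143475) * n + (-3909422279171363445) * n^2 + (-31906321613958771234) * n^3 + (-178957283729506807860) * n^4 + (-731599005886078112640) * n^5 + (-2255451286766201193600) * n^6 + (-5349810265327410693192) * n^7 + (-9868513493508953985936) * n^8 + (-14206567001914759662144) * n^9 + (-15910200670998801359232) * n^10 + (-13717957039124631705216) * n^11 + (-8928270652840843173120) * n^12 + (-4241049416813892483072) * n^13 + (-1386824124476864360448) * n^14 + (-278961768829247422464) * n^15 + (-26007710676880195584) * n^16) + k * (((-3210877374306525) + (-73885657554971640) * n + (-786302881870833432) * n^2 + (-5123326994589179052) * n^3 + (-22810660169527036584) * n^4 + (-73351448959452752016) * n^5 + (-175559179899337385112) * n^6 + (-317514591562765500288) * n^7 + (-435837446379650500992) * n^8 + (-451649871903477352320) * n^9 + (-347690796468944607360) * n^10 + (-192749169294261895680) * n^11 + (-72719473233697081344) * n^12 + (-16708282146195922944) * n^13 + (-1763506835359727616) * n^14) + k * ((2755164376485675 + 65515788139125555 * n + 715854238470119169 * n^2 + 4764474226795297410 * n^3 + 21580172302042741572 * n^4 + 70362864492230008944 * n^5 + 170293083145302410784 * n^6 + 310738404534986004480 * n^7 + 429523966963243604160 * n^8 + 447499643847509175552 * n^9 + 345865185083985530112 * n^10 + 192267043815069780480 * n^11 + 72661705277962420224 * n^12 + 16708282146195922944 * n^13 + 1763506835359727616 * n^14) + k * ((1060653530561625 + 19606090183504650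 * n + 165924987747895710 * n^2 + 849051105140970504 * n^3 + 2922301852921728432 * n^4 + 7119260748854375040 * n^5 + 12574987224783638400 * n^6 + 16211144762646427008 * n^7 + 15125017683164285952 * n^8 + 9952068012434468352 * n^9 + 4380296528026317312 * n^10 + 1157101150061076480 * n^11 + 138643093763186688 * n^12) + k * (((-598061496272625) + (-11478415113635400) * n + (-100174454589938580) * n^2 + (-525558600439071696) * n^3 + (-1845606947103732816) * n^4 + (-4568695953060756096) * n^5 + (-8171395483710500352) * n^6 + (-10635166315571065344) * n^7 + (-9992249022073241088) * n^8 + (-6606447601992459264) * n^9 + (-2916295032432651264) * n^10 + (-771400766707384320) * n^11 + (-92428729175457792) * n^12) + k * (((-182336762153700) + (-2677764446723520) * n + (-17646743802251376) * n^2 + (-68681972091398976) * n^3 + (-174666725172072000) * n^4 + (-302933358084519936) * n^5 + (-362425029522944256) * n^6 + (-294974953160223744) * n^7 + (-156110260234254336) * n^8 + (-48453267938033664) * n^9 + (-6690262145531904) * n^10) + k * ((79759845603900 + 1209667960952640 * n + 8189846086239792 * n^2 + 32582954898959328 * n^3 + 84313535902731648 * n^4 + 148182149181581568 * n^5 + 179006831082323712 * n^6 + 146652604366874112 * n^7 + 77918923404407808 * n^8 + 24226633969016832 * n^9 + 3345131072765952 * n^10) + k * ((15001319718000 + 170520080320800 * n + 838736634889440 * n^2 + 2333659297610880 * n^3 + 4016583120764160 * n^4 + 4374524364917760 * n^5 + 2939941815667200 * n^6 + 1113162950983680 * n^7 + 181608950292480 * n^8) + k * (((-5580406062000) + (-64676826345600)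 * n + (-323565750705600) * n^2 + (-912699256292352) * n^3 + (-1586928334355712) * n^4 + (-1740112180660224) * n^5 + (-1174037213205504) * n^6 + (-445265180393472) * n^7 + (-72643580116992) * n^8) + k * (((-458314718400) + (-3852224490240) * n + (-13013349000192) * n^2 + (-22652141184000) * n^3 + (-21496269763584) * n^4 + (-10579162152960) * n^5 + (-2115832430592) * n^6) + k * ((152771572800 + 1284074830080 * n + 4337783000064 * n^2 + 7550713728000 * n^3 + 7165423254528 * n^4 + 3526387384320 * n^5 + 705277476864 * n^6)))))))))))))"


definition tt :: "nat \<Rightarrow> nat \<Rightarrow> real" where
  "tt n k = (-1) ^ k * (4 * real k + 1) *
            (pochhammer (- 3 * real n) k * pochhammer (- 4 * real n - 1/6) k * pochhammer (1/2) k)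
          / (fact k * pochhammer (3 * real n + 3/2) k * pochhammer (4 * real n + 5/3) k)"

definition BB :: "nat \<Rightarrow> nat \<Rightarrow> real" where
  "BB n k = (-1) ^ k * (pochhammer (-3*real n-3) k * pochhammer (-4*real n-25/6) k * pochhammer (1/2) k)
          / (fact k * pochhammer (3*real n+9/2) k * pochhammer (4*real n+17/3) k)"

definition Dp :: "real \<Rightarrow> real" where
  "Dp x = ((-3*x-3)*(-3*x-2)*(-3*x-1)) * ((-24*x-25)*(-24*x-19)*(-24*x-13)*(-24*x-7))
     * ((6*x+3)*(6*x+5)*(6*x+7)) * ((12*x+5)*(12*x+8)*(12*x+11)*(12*x+14))"
definition Qp :: "real \<Rightarrow> real \<Rightarrow> real" where
  "Qp x k = ((k-3*x-3)*(k-3*x-2)*(k-3*x-1)) * ((6*k-24*x-25)*(6*k-24*x-19)*(6*k-24*x-13)*(6*k-24*x-7))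
     * ((2*k+6*x+3)*(2*k+6*x+5)*(2*k+6*x+7)) * ((3*k+12*x+5)*(3*k+12*x+8)*(3*k+12*x+11)*(3*k+12*x+14))"
definition Ep :: "real \<Rightarrow> real" where
  "Ep x = (21*x+11)*(21*x+23)*(21*x+5)*(21*x+17)*(21*x+8)*(21*x+20)"
definition Np :: "real \<Rightarrow> real" where
  "Np x = (12*x+11)*(6*x+5)*(2*x+1)*(12*x+5)*(6*x+7)*(6*x+7)"
definition Rp :: "real \<Rightarrow> real \<Rightarrow> real" where
  "Rp x k = (k-3*x-3)*(6*k-24*x-25)*(2*k+1)"
definition Sp :: "real \<Rightarrow> real \<Rightarrow> real" where
  "Sp x k = 2*k*(2*k+6*x+7)*(3*k+12*x+14)"

definition GG :: "nat \<Rightarrow> nat \<Rightarrow> real" where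
  "GG n k = Sp (real n) (real k) * Yp (real n) (real k) / (7 * Dp (real n) * Ep (real n)) * BB n k"

definition cc :: "nat \<Rightarrow> real" where
  "cc n = (2^8 * 3^3 / 7^7) * ((11/12 + real n) * (5/6 + real n) * (1/2 + real n) * (5/12 + real n) * (7/6 + real n)^2)
     / ((11/21 + real n) * (23/21 + real n) * (5/21 + real n) * (17/21 + real n) * (8/21 + real n) * (20/21 + real n))"

lemma genc: fixes a b c d e g h i j l m :: real
  assumes "g \<noteq> 0" "h \<noteq> 0" "i \<noteq> 0" "j \<noteq> 0" "l \<noteq> 0" "m \<noteq> 0"
  shows "(2^8 * 3^3 / 7^7) * ((a/12) * (b/6) * (c/2) * (d/12) * (e/6)^2) / ((g/21)*(h/21)*(i/21)*(j/21)*(l/21)*(m/21))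
    = 81/7 * (a*b*c*d*e*e)/(g*h*i*j*l*m)"
  using assms by (simp add: field_simps power2_eq_square)

lemma cc_eq: "cc n = 81/7 * Np (real n) / Ep (real n)"
proof -
  let ?x = "real n"
  have e: "(11/12 + ?x) = (12*?x+11)/12" "(5/6 + ?x) = (6*?x+5)/6" "(1/2+?x) = (2*?x+1)/2" "5/12+?x = (12*?x+5)/12" "7/6+?x = (6*?x+7)/6"
     "11/21+?x = (21*?x+11)/21" "23/21+?x = (21*?x+23)/21" "5/21+?x = (21*?x+5)/21" "17/21+?x = (21*?x+17)/21"
     "8/21+?x = (21*?x+8)/21" "20/21+?x = (21*?x+20)/21" by (simp_all add: field_simps)
  show ?thesis unfolding cc_def Np_def Ep_def e by (rule genc) auto
qed

lemma Dp_nz: "x \<ge> 0 \<Longrightarrow> Dp x \<noteq> 0"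
  unfolding Dp_def by auto
lemma Ep_nz: "x \<ge> 0 \<Longrightarrow> Ep x \<noteq> 0"
  unfolding Ep_def by auto

lemma L1: "tt (Suc n) k = (4 * real k + 1) * BB n k"
proof -
  have a1: "- 3 * real (Suc n) = -3*real n-3" and a2: "- 4 * real (Suc n) - 1/6 = -4*real n-25/6"
    and a3: "3 * real (Suc n) + 3/2 = 3*real n+9/2" and a4: "4 * real (Suc n) + 5/3 = 4*real n+17/3"
    by (simp_all add: field_simps)
  show ?thesis unfolding tt_def BB_def a1 a2 a3 a4 by simp
qed

lemma gen2:
  fixes s K pA pB pC pD PA PB PC PD H F qa qb qc qd aa ab ac ad :: real
  assumes "pA*aa = PA*qa" "pB*ab = PB*qb" "PC*ac = pC*qc" "PD*ad = pD*qd"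
    "aa \<noteq> 0" "ab \<noteq> 0" "ac \<noteq> 0" "ad \<noteq> 0" "qc \<noteq> 0" "qd \<noteq> 0" "pC \<noteq> 0" "pD \<noteq> 0" "F \<noteq> 0"
  shows "s*K*(pA*pB*H)/(F*pC*pD) = K*(s*(PA*PB*H)/(F*PC*PD))*(qa*qb*qc*qd)/(aa*ab*ac*ad)"
proof -
  have e1: "pA = PA*qa/aa" "pB = PB*qb/ab" "pC = PC*ac/qc" "pD = PD*ad/qd"
    using assms by (simp_all add: field_simps)
  have "PC \<noteq> 0" "PD \<noteq> 0" using assms e1 by auto
  then show ?thesis unfolding e1 using assms by (simp add: field_simps)
qed

lemma L2: "tt n k = (4 * real k + 1) * BB n k * Qp (real n) (real k) / Dp (real n)"
proof -
  let ?x = "real n" and ?k = "real k"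
  have pos: "pochhammer (3 * ?x + 3/2) k > 0" "pochhammer (4 * ?x + 5/3) k > 0" "fact k > (0::real)"
    by (auto intro!: pochhammer_pos)
  show ?thesis
    unfolding tt_def BB_def Qp_def Dp_def
    apply (rule gen2[OF shA[of ?k k ?x] shB[of ?k k ?x] shC[of ?k k ?x] shD[of ?k k ?x]])
    using pos by (auto simp: add_nonneg_pos)
qed

lemma gen3: fixes s P1 P2 H F C D k1 c1 d1 u v w R S1 :: real
  assumes "F \<noteq> 0" "C \<noteq> 0" "D \<noteq> 0" "k1 \<noteq> 0" "c1 \<noteq> 0" "d1 \<noteq> 0" "R = 12*u*v*w" "S1 = 12*k1*c1*d1"
  shows "(-1*s)*(P1*u*(P2*v)*(H*w))/((k1*F)*(C*c1)*(D*d1)) = s*(P1*P2*H)/(F*C*D) * (-R)/S1"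
  using assms by (simp add: field_simps)

lemma L3: "BB n (Suc k) = BB n k * (- Rp (real n) (real k)) / Sp (real n) (real k + 1)"
proof -
  let ?x = "real n" and ?k = "real k"
  have pos: "pochhammer (3 * ?x + 9/2) k > 0" "pochhammer (4 * ?x + 17/3) k > 0" "fact k > (0::real)"
    by (auto intro!: pochhammer_pos)
  show ?thesis unfolding BB_def pochhammer_Suc fact_Suc power_Suc
    apply (rule gen3)
    using pos by (auto simp: Rp_def Sp_def field_simps)
qed

lemma key_poly:
  fixes x k :: real
  shows "(4*k+1) * (7 * Dp x * Ep x - 81 * Np x * Qp x k) = - Rp x k * Yp x (k+1) - Sp x k * Yp x k"
  unfolding Yp_def Dp_def Ep_def Np_def Qp_def Rp_def Sp_def by algebra

lemma gen_tel: fixes K B D E N Q R Y1 Y0 S1 S0 :: real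
  assumes "D \<noteq> 0" "E \<noteq> 0" "S1 \<noteq> 0" "K * (7*D*E - 81*N*Q) = - R*Y1 - S0*Y0"
  shows "K*B - (81/7*N/E) * (K*B*Q/D) = S1*Y1/(7*D*E)*(B*(-R)/S1) - S0*Y0/(7*D*E)*B"
proof -
  have "K*B - (81/7*N/E) * (K*B*Q/D) = B*(K * (7*D*E - 81*N*Q))/(7*D*E)"
    using assms by (simp add: field_simps)
  also have "\<dots> = B*(- R*Y1 - S0*Y0)/(7*D*E)" using assms(4) by simp
  also have "\<dots> = S1*Y1/(7*D*E)*(B*(-R)/S1) - S0*Y0/(7*D*E)*B"
    using assms by (simp add: field_simps)
  finally show ?thesis .
qed

lemma tel: "tt (Suc n) k - cc n * tt n k = GG n (Suc k) - GG n k"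
proof -
  let ?x = "real n" and ?k = "real k"
  have s: "Sp ?x (?k+1) > 0" unfolding Sp_def by (auto intro!: mult_pos_pos)
  have "tt (Suc n) k - cc n * tt n k = (4*?k+1)*BB n k - (81/7*Np ?x/Ep ?x) * ((4*?k+1)*BB n k*Qp ?x ?k/Dp ?x)"
    by (simp only: L1 L2[of n k] cc_eq)
  also have "\<dots> = Sp ?x (?k+1) * Yp ?x (?k+1) / (7*Dp ?x*Ep ?x) * (BB n k * (- Rp ?x ?k)/Sp ?x (?k+1))
       - Sp ?x ?k * Yp ?x ?k / (7*Dp ?x*Ep ?x) * BB n k"
    by (rule gen_tel) (use s Dp_nz Ep_nz key_poly in auto)
  also have "\<dots> = GG n (Suc k) - GG n k"
    using s by (simp add: GG_def L3 ac_simps)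
  finally show ?thesis .
qed


lemma tt_zero: "k > 3*n \<Longrightarrow> tt n k = 0"
proof -
  assume "k > 3*n"
  then have "pochhammer (- of_nat (3*n) :: real) k = 0" by (rule pochhammer_of_nat_eq_0_lemma)
  moreover have "- 3 * real n = - of_nat (3*n)" by simp
  ultimately show ?thesis unfolding tt_def by simp
qed

lemma BB_zero: "k > 3*n+3 \<Longrightarrow> BB n k = 0"
proof -
  assume "k > 3*n+3"
  then have "pochhammer (- of_nat (3*n+3) :: real) k = 0" by (rule pochhammer_of_nat_eq_0_lemma)
  moreover have "-3 * real n - 3 = - of_nat (3*n+3)" by simp
  ultimately show ?thesis unfolding BB_def by simp
qed

lemma sum_ext: "M \<ge> 3*n+1 \<Longrightarrow> (\<Sum>k<M. tt n k) = (\<Sum>k<3*n+1. tt n k)"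
  by (rule sum.mono_neutral_right) (auto intro!: tt_zero)

definition SS :: "nat \<Rightarrow> real" where "SS n = (\<Sum>k<3*n+1. tt n k)"

lemma SS_rec: "SS (Suc n) = cc n * SS n"
proof -
  have "(\<Sum>k<3*n+4. tt (Suc n) k - cc n * tt n k) = GG n (3*n+4) - GG n 0"
    unfolding tel by (rule sum_lessThan_telescope)
  also have "\<dots> = 0" by (simp add: GG_def Sp_def BB_zero)
  finally have "(\<Sum>k<3*n+4. tt (Suc n) k) = cc n * (\<Sum>k<3*n+4. tt n k)"
    by (simp add: sum_subtractf sum_distrib_left)
  note A = this
  have B: "(\<Sum>k<3*n+4. tt n k) = (\<Sum>k<3*n+1. tt n k)" by (rule sum_ext) simp
  have eq: "3 * Suc n + 1 = 3*n+4" by simp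
  show ?thesis unfolding SS_def eq A B by (rule refl)
qed

definition RR :: "nat \<Rightarrow> real" where
  "RR n = ((2^8 * 3^3 / 7^7) ^ n *
           (pochhammer (11/12) n * pochhammer (5/6) n * pochhammer (1/2) n *
            pochhammer (5/12) n * (pochhammer (7/6) n)^2)
         / (pochhammer (11/21) n * pochhammer (23/21) n * pochhammer (5/21) n *
            pochhammer (17/21) n * pochhammer (8/21) n * pochhammer (20/21) n))"

lemma genR: fixes K A1 A2 A3 A4 A5 B1 B2 B3 B4 B5 B6 a1 a2 a3 a4 a5 b1 b2 b3 b4 b5 b6 P :: real
  assumes "B1 \<noteq> 0" "B2 \<noteq> 0" "B3 \<noteq> 0" "B4 \<noteq> 0" "B5 \<noteq> 0" "B6 \<noteq> 0"
     "b1 \<noteq> 0" "b2 \<noteq> 0" "b3 \<noteq> 0" "b4 \<noteq> 0" "b5 \<noteq> 0" "b6 \<noteq> 0"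
  shows "(K*P) * (A1*a1 * (A2*a2) * (A3*a3) * (A4*a4) * (A5*a5)^2) / (B1*b1 * (B2*b2) * (B3*b3) * (B4*b4) * (B5*b5) * (B6*b6))
    = K * (a1*a2*a3*a4*a5^2) / (b1*b2*b3*b4*b5*b6) * (P * (A1*A2*A3*A4*A5^2) / (B1*B2*B3*B4*B5*B6))"
  using assms by (simp add: field_simps power2_eq_square)

lemma RR_rec: "RR (Suc n) = cc n * RR n"
  unfolding RR_def cc_def pochhammer_Suc power_Suc[of "2^8 * 3^3 / 7^7"]
  apply (rule genR)
  by (auto intro!: pochhammer_pos[THEN less_imp_neq, THEN not_sym] simp: add_pos_nonneg)

lemma SS_RR: "SS n = RR n"
proof (induction n)
  case 0
  show ?case by (simp add: SS_def RR_def tt_def)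
next
  case (Suc n)
  then show ?case by (simp add: SS_rec RR_rec)
qed

theorem theorem11:
  fixes n :: nat
  shows "(\<lambda>k. (-1) ^ k * (4 * real k + 1) *
            (pochhammer (- 3 * real n) k * pochhammer (- 4 * real n - 1/6) k * pochhammer (1/2) k)
          / (fact k * pochhammer (3 * real n + 3/2) k * pochhammer (4 * real n + 5/3) k))
     sums ((2^8 * 3^3 / 7^7) ^ n *
           (pochhammer (11/12) n * pochhammer (5/6) n * pochhammer (1/2) n *
            pochhammer (5/12) n * (pochhammer (7/6) n)^2)
         / (pochhammer (11/21) n * pochhammer (23/21) n * pochhammer (5/21) n *
            pochhammer (17/21) n * pochhammer (8/21) n * pochhammer (20/21) n))"
proof -
  have "tt n sums (\<Sum>k\<in>{..<3*n+1}. tt n k)"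
    by (rule sums_finite) (auto intro!: tt_zero)
  then have "tt n sums RR n" using SS_RR[of n] unfolding SS_def by simp
  then show ?thesis unfolding RR_def tt_def[abs_def] .
qed

end
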